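(* Up to shifting and reversing indices, there is exactly one 4-chain having three consecutive equal terms, namely the 4-chain $(u_n)$ with $u_0=u_1=u_2=u_3=-1$ (whose neighbouring terms are $u_{-1}=u_4=1$, $u_{-2}=u_5=-3$, $u_{-3}=u_6=-17$, $u_{-4}=u_7=1541,\dots$).
   Context: A 4-chain is a bi-infinite sequence of integers $(u_n)_{n\in\mathbb Z}$ satisfying $u_{n-1}u_{n+1}=u_n^3+u_n^{f(n)}+1$ for all $n\in\mathbb Z$, where $f(n)=1$ if $n\equiv 0,3\pmod 4$ and $f(n)=2$ if $n\equiv 1,2\pmod 4$. Two 4-chains $(u_n)$, $(v_n)$ are considered the same if there is $k\in\mathbb Z$ with $u_n=v_{k+n}$ for all $n$ or $u_n=v_{k-n}$ for all $n$. *)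

theory Defs
  imports Main
begin

definition chain_exp :: "int \<Rightarrow> nat" where
  "chain_exp n = (if n mod 4 = 0 \<or> n mod 4 = 3 then 1 else 2)"

definition four_chain :: "(int \<Rightarrow> int) \<Rightarrow> bool" where
  "four_chain u \<longleftrightarrow>
     (\<forall>n. u (n - 1) * u (n + 1) = u n ^ 3 + u n ^ chain_exp n + 1)"

definition same_chain :: "(int \<Rightarrow> int) \<Rightarrow> (int \<Rightarrow> int) \<Rightarrow> bool" where
  "same_chain u v \<longleftrightarrow>
     (\<exists>k. (\<forall>n. u n = v (k + n)) \<or> (\<forall>n. u n = v (k - n)))"

definition three_consecutive_equal :: "(int \<Rightarrow> int) \<Rightarrow> bool" where
  "three_consecutive_equal u \<longleftrightarrow> (\<exists>m. u m = u (m + 1) \<and> u (m + 1) = u (m + 2))"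

end

theory Submission
  imports Defs
begin

definition Fc :: "int \<Rightarrow> int \<Rightarrow> int" where
  "Fc n x = x^3 + x^chain_exp n + 1"

lemma ce_cases: "chain_exp n = 1 \<or> chain_exp n = 2"
  by (simp add: chain_exp_def)

lemma ce_sum: "chain_exp n + chain_exp (n+2) = 3"
  unfolding chain_exp_def by presburger

lemma ce_refl: "chain_exp (3 - n) = chain_exp n"
  unfolding chain_exp_def by presburger

lemma ce_shift: "c mod 4 = 0 \<Longrightarrow> chain_exp (n + c) = chain_exp n"
  unfolding chain_exp_def by presburger

lemma unit_neg1: "(a::int) * b = -1 \<Longrightarrow> a = 1 \<or> a = -1"
  by (auto simp: zmult_eq_neg1_iff)

lemma Fc_nz: "Fc n x \<noteq> 0"
proof
  assume h: "Fc n x = 0"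
  from ce_cases[of n] show False
  proof
    assume e: "chain_exp n = 1"
    with h have "x * (x^2 + 1) = -1" by (simp add: Fc_def power2_eq_square power3_eq_cube algebra_simps)
    then have "x = 1 \<or> x = -1" by (rule unit_neg1)
    with h e show False by (auto simp: Fc_def)
  next
    assume e: "chain_exp n = 2"
    with h have "x * (x^2 + x) = -1" by (simp add: Fc_def power2_eq_square power3_eq_cube algebra_simps)
    then have "x = 1 \<or> x = -1" by (rule unit_neg1)
    with h e show False by (auto simp: Fc_def)
  qed
qed

lemma key:
  fixes x y z :: int
  assumes d1: "y dvd x*z - 1" and d2: "y dvd x^3 + x^b + 1" and ab: "a + b = 3"
    and a1: "a = 1 \<or> a = 2"
  shows "y dvd z^3 + z^a + 1"
proof -
  have cop: "coprime y x"
  proof (rule coprimeI)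
    fix c assume "c dvd y" "c dvd x"
    then have "c dvd x*z - 1" "c dvd x*z" using d1 by auto
    then have "c dvd x*z - (x*z - 1)" by (metis dvd_diff)
    then show "is_unit c" by simp
  qed
  have "y dvd x^3 * (z^3 + z^a + 1)"
  proof (cases "a = 1")
    case True
    then have b: "b = 2" using ab by simp
    have "x^3 * (z^3 + z^a + 1) = (x^3+x^b+1) + (x*z-1)*((x*z)^2+x*z+1+x^2)"
      using True b by (simp add: algebra_simps power2_eq_square power3_eq_cube)
    then show ?thesis using d1 d2 by (simp add: dvd_add dvd_mult2)
  next
    case False
    then have a: "a = 2" and b: "b = 1" using ab a1 by auto
    have "x^3 * (z^3 + z^a + 1) = (x^3+x^b+1) + (x*z-1)*((x*z)^2+x*z+1+x*(x*z+1))"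
      using a b by (simp add: algebra_simps power2_eq_square power3_eq_cube)
    then show ?thesis using d1 d2 by (simp add: dvd_add dvd_mult2)
  qed
  moreover have "coprime y (x^3)" using cop by simp
  ultimately show ?thesis using coprime_dvd_mult_right_iff by blast
qed

fun s :: "nat \<Rightarrow> int" where
  "s 0 = -1" | "s (Suc 0) = -1"
| "s (Suc (Suc k)) = Fc (int k + 1) (s (Suc k)) div s k"

lemma s_inv: "s k \<noteq> 0 \<and> s (Suc k) \<noteq> 0 \<and> s k dvd Fc (int k + 1) (s (Suc k))
   \<and> s (Suc k) dvd Fc (int k) (s k)"
proof (induction k)
  case 0 then show ?case by simp
next
  case (Suc k)
  define x where "x = s k"
  define y where "y = s (Suc k)"
  define z where "z = s (Suc (Suc k))"
  have xz: "x * z = Fc (int k + 1) y"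
    using Suc by (simp add: x_def y_def z_def)
  have z0: "z \<noteq> 0" using xz Fc_nz by (metis mult_zero_right)
  have "y dvd y^3 + y ^ chain_exp (int k + 1)"
    using ce_cases[of "int k + 1"] by (auto simp: power3_eq_cube power2_eq_square)
  then have d1: "y dvd x*z - 1" using xz by (simp add: Fc_def)
  have d2: "y dvd x^3 + x ^ chain_exp (int k) + 1" using Suc by (simp add: x_def y_def Fc_def)
  have "y dvd z^3 + z ^ chain_exp (int k + 2) + 1"
    apply (rule key[OF d1 d2])
    using ce_sum[of "int k"] ce_cases[of "int k + 2"] by auto
  note d5 = this
  have eq: "int (Suc k) + 1 = int k + 2" by simp
  have d3: "s (Suc k) dvd Fc (int (Suc k) + 1) (s (Suc (Suc k)))"
    unfolding Fc_def eq y_def[symmetric] z_def[symmetric] by (rule d5)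
  have d4: "s (Suc (Suc k)) dvd Fc (int (Suc k)) (s (Suc k))"
  proof -
    have "z dvd x * z" by simp
    then have "z dvd Fc (int k + 1) y" using xz by simp
    moreover have "int (Suc k) = int k + 1" by simp
    ultimately show ?thesis unfolding y_def z_def by metis
  qed
  show ?case using Suc z0 d3 d4 by (simp add: z_def)
qed

lemma s_rec: "s k * s (Suc (Suc k)) = Fc (int k + 1) (s (Suc k))"
  using s_inv[of k] by simp

definition u :: "int \<Rightarrow> int" where
  "u n = (if n \<ge> 0 then s (nat n) else s (nat (3 - n)))"

lemma s23: "s 2 = -1" "s 3 = -1"
  by (simp_all add: numeral_eq_Suc Fc_def chain_exp_def)

lemma u_small: "u 0 = -1" "u 1 = -1" "u 2 = -1" "u 3 = -1"
  by (simp_all add: u_def s23)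

lemma u_refl: "u (3 - n) = u n"
proof -
  consider "n < 0" | "n > 3" | "n = 0" | "n = 1" | "n = 2" | "n = 3" by linarith
  then show ?thesis
    by cases (auto simp: u_def s23)
qed

lemma u_pos: "n \<ge> 1 \<Longrightarrow> u (n-1) * u (n+1) = Fc n (u n)"
proof -
  assume "n \<ge> 1"
  then obtain k where k: "n = int k + 1" by (metis add.commute nat_int_add zle_iff_zadd)
  have "nat (n+1) = Suc (Suc k)" "nat n = Suc k" using k by auto
  then show ?thesis using s_rec[of k] k by (simp add: u_def)
qed

lemma u_chain: "four_chain u"
  unfolding four_chain_def
proof
  fix n
  show "u (n - 1) * u (n + 1) = u n ^ 3 + u n ^ chain_exp n + 1"
  proof (cases "n \<ge> 1")
    case True then show ?thesis using u_pos[of n] by (simp add: Fc_def)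
  next
    case False
    have "u (3-n-1) * u (3-n+1) = Fc (3-n) (u (3-n))" using False by (intro u_pos) simp
    moreover have "u (3-n-1) = u (n+1)" using u_refl[of "n+1"] by (simp add: algebra_simps)
    moreover have "u (3-n+1) = u (n-1)" using u_refl[of "n-1"] by (simp add: algebra_simps)
    ultimately show ?thesis by (simp add: Fc_def u_refl ce_refl mult.commute)
  qed
qed

lemma chain_nz: "four_chain v \<Longrightarrow> v n \<noteq> 0"
proof
  assume c: "four_chain v" and z: "v n = 0"
  from c have "v (n+1-1) * v (n+1+1) = Fc (n+1) (v (n+1))"
    unfolding four_chain_def Fc_def by blast
  with z Fc_nz show False by simp
qed

lemma chain_rec: "four_chain v \<Longrightarrow> v (n - 1) * v (n + 1) = Fc n (v n)"
  unfolding four_chain_def Fc_def by blast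

lemma shift_chain: "four_chain v \<Longrightarrow> c mod 4 = 0 \<Longrightarrow> four_chain (\<lambda>n. v (n + c))"
  unfolding four_chain_def
proof
  fix n assume h: "\<forall>n. v (n - 1) * v (n + 1) = v n ^ 3 + v n ^ chain_exp n + 1" and c: "c mod 4 = 0"
  have "v (n + c - 1) * v (n + c + 1) = v (n+c) ^ 3 + v (n+c) ^ chain_exp (n+c) + 1" using h by blast
  then show "v (n - 1 + c) * v (n + 1 + c) = v (n + c) ^ 3 + v (n + c) ^ chain_exp n + 1"
    using ce_shift[OF c, of n] by (simp add: algebra_simps)
qed

lemma agree:
  assumes cv: "four_chain v" and cw: "four_chain w" and a0: "v a = w a" and a1: "v (a+1) = w (a+1)"
  shows "v n = w n"
proof -
  have fw: "v (a + int k) = w (a + int k) \<and> v (a + int k + 1) = w (a + int k + 1)" for k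
  proof (induction k)
    case 0 then show ?case using a0 a1 by simp
  next
    case (Suc k)
    let ?m = "a + int k + 1"
    have "v (?m - 1) * v (?m + 1) = w (?m - 1) * w (?m + 1)"
      using chain_rec[OF cv, of ?m] chain_rec[OF cw, of ?m] Suc by simp
    moreover have "v (?m - 1) = w (?m - 1)" "v (?m - 1) \<noteq> 0" using Suc chain_nz[OF cv] by auto
    ultimately have "v (?m + 1) = w (?m + 1)" by simp
    then show ?case using Suc by (simp add: algebra_simps)
  qed
  have bw: "v (a - int k) = w (a - int k) \<and> v (a - int k + 1) = w (a - int k + 1)" for k
  proof (induction k)
    case 0 then show ?case using a0 a1 by simp
  next
    case (Suc k)
    let ?m = "a - int k"
    have "v (?m - 1) * v (?m + 1) = w (?m - 1) * w (?m + 1)"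
      using chain_rec[OF cv, of ?m] chain_rec[OF cw, of ?m] Suc by simp
    moreover have "v (?m + 1) = w (?m + 1)" "v (?m + 1) \<noteq> 0" using Suc chain_nz[OF cv] by auto
    ultimately have "v (?m - 1) = w (?m - 1)" by simp
    then show ?case using Suc by (simp add: algebra_simps)
  qed
  show ?thesis
  proof (cases "n \<ge> a")
    case True
    then have "n = a + int (nat (n - a))" by simp
    then show ?thesis using fw[of "nat (n-a)"] by metis
  next
    case False
    then have "n = a - int (nat (a - n))" by simp
    then show ?thesis using bw[of "nat (a-n)"] by metis
  qed
qed

theorem mainTheorem8:
  shows "\<exists>u. four_chain u \<and> u 0 = -1 \<and> u 1 = -1 \<and> u 2 = -1 \<and> u 3 = -1 \<and>
           (\<forall>v. four_chain v \<longrightarrow> (three_consecutive_equal v \<longleftrightarrow> same_chain v u))"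
proof (intro exI conjI allI impI)
  show "four_chain u" by (rule u_chain)
  show "u 0 = -1" "u 1 = -1" "u 2 = -1" "u 3 = -1" by (rule u_small)+
  fix v assume cv: "four_chain v"
  show "three_consecutive_equal v = same_chain v u"
  proof
    assume "three_consecutive_equal v"
    then obtain m where m1: "v m = v (m+1)" and m2: "v (m+1) = v (m+2)"
      unfolding three_consecutive_equal_def by blast
    define c where "c = v (m+1)"
    have r: "v (m+1-1) * v (m+1+1) = Fc (m+1) (v (m+1))" by (rule chain_rec[OF cv])
    then have r: "c * c = c^3 + c ^ chain_exp (m+1) + 1"
      using m1 m2 by (simp add: c_def Fc_def add.assoc)
    have e2: "chain_exp (m+1) = 2"
    proof (rule ccontr)
      assume "chain_exp (m+1) \<noteq> 2"
      then have "chain_exp (m+1) = 1" using ce_cases by blast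
      with r have "c * (c^2 - c + 1) = -1" by (simp add: algebra_simps power2_eq_square power3_eq_cube)
      then have "c = 1 \<or> c = -1" by (rule unit_neg1)
      with r \<open>chain_exp (m+1) = 1\<close> show False by auto
    qed
    with r have "c * c^2 = -1" by (simp add: algebra_simps power2_eq_square power3_eq_cube)
    then have "c = 1 \<or> c = -1" by (rule unit_neg1)
    with r e2 have cm: "c = -1" by auto
    from e2 have "m mod 4 = 0 \<or> m mod 4 = 1" unfolding chain_exp_def by (auto split: if_splits; presburger)
    then show "same_chain v u"
    proof
      assume mm: "m mod 4 = 0"
      have cw: "four_chain (\<lambda>n. u (n + (-m)))" using mm by (intro shift_chain u_chain) presburger
      have "v n = u (n + (-m))" for n
        by (rule agree[OF cv cw, of m]) (use cm m1 u_small in \<open>auto simp: c_def\<close>)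
      then show ?thesis unfolding same_chain_def by (intro exI[of _ "-m"]) (simp add: add.commute)
    next
      assume mm: "m mod 4 = 1"
      have cw: "four_chain (\<lambda>n. u (n + (1-m)))" using mm by (intro shift_chain u_chain) presburger
      have "v n = u (n + (1-m))" for n
        by (rule agree[OF cv cw, of m]) (use cm m1 u_small in \<open>auto simp: c_def\<close>)
      then show ?thesis unfolding same_chain_def by (intro exI[of _ "1-m"]) (simp add: add.commute)
    qed
  next
    assume "same_chain v u"
    then obtain k where "(\<forall>n. v n = u (k + n)) \<or> (\<forall>n. v n = u (k - n))"
      unfolding same_chain_def by blast
    then show "three_consecutive_equal v"
      unfolding three_consecutive_equal_def
    proof
      assume h: "\<forall>n. v n = u (k + n)"
      show "\<exists>m. v m = v (m + 1) \<and> v (m + 1) = v (m + 2)"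
        by (rule exI[of _ "-k"]) (simp add: h u_small)
    next
      assume h: "\<forall>n. v n = u (k - n)"
      show "\<exists>m. v m = v (m + 1) \<and> v (m + 1) = v (m + 2)"
        by (rule exI[of _ "k-2"]) (simp add: h u_small)
    qed
  qed
qed

end
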